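(* Let $P:\mathcal{C}^{\mathrm{op}}\to\mathbf{Pos}$ be a universal slat-doctrine such that $\mathcal{C}$ has exponents. Then the unit $\iota:P\to P^{ex}$ of the existential completion preserves the universal structure: for all objects $A,B$ of $\mathcal{C}$, $\iota_A\circ\forall_{\mathrm{pr}_A}=\forall^{ex}_{\mathrm{pr}_A}\circ\iota_{A\times B}$ as maps $P(A\times B)\to P^{ex}(A)$, where $\mathrm{pr}_A:A\times B\to A$.
   Context: A slat-doctrine is a functor $P:\mathcal{C}^{\mathrm{op}}\to\mathbf{Pos}$ with $\mathcal{C}$ having finite products; $P_f$ is reindexing along $f$. It is universal if reindexing along each product projection has a right adjoint $\forall$ satisfying Beck–Chevalley (for every pullback of a projection $\mathrm{pr}:X\to A$ along $f:A'\to A$, with resulting projection $\mathrm{pr}'$ and $f':X'\to X$, $\forall_{\mathrm{pr}'}P_{f'}=P_f\forall_{\mathrm{pr}}$). Existential completion: $P^{ex}(A)$ is the poset (reflection) of triples $(A,B,\alpha)$, $\alpha\in P(A\times B)$, with $(A,B,\alpha)\le(A,C,\beta)$ iff some $f:A\times B\to C$ has $\alpha\le P_{\langle\mathrm{pr}_A,f\rangle}(\beta)$; $P^{ex}_f(C,D,\gamma)=(A,D,P_{f\times 1_D}(\gamma))$. When $P$ is universal and $\mathcal{C}$ has exponents, $P^{ex}$ is universal; $\forall^{ex}$ denotes the right adjoints of its reindexing along projections. The unit $\iota_A:P(A)\to P^{ex}(A)$ sends $\alpha$ to $(A,1,P_{\mathrm{pr}_A}(\alpha))$ with $\mathrm{pr}_A:A\times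 1\to A$. *)

theory Defs
  imports Main
begin

record ('o,'m) cat =
  Ob  :: "'o set"
  Arr :: "'m set"
  Dom :: "'m \<Rightarrow> 'o"
  Cod :: "'m \<Rightarrow> 'o"
  Comp :: "'m \<Rightarrow> 'm \<Rightarrow> 'm"   (* Comp C g f = g o f *)
  Idm :: "'o \<Rightarrow> 'm"

definition Hom :: "('o,'m,'z) cat_scheme \<Rightarrow> 'o \<Rightarrow> 'o \<Rightarrow> 'm set" where
  "Hom C A B = {f \<in> Arr C. Dom C f = A \<and> Cod C f = B}"

definition category :: "('o,'m,'z) cat_scheme \<Rightarrow> bool" where
  "category C \<longleftrightarrow>
     (\<forall>f\<in>Arr C. Dom C f \<in> Ob C \<and> Cod C f \<in> Ob C) \<and>
     (\<forall>A\<in>Ob C. Idm C A \<in> Hom C A A) \<and>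
     (\<forall>f\<in>Arr C. Comp C f (Idm C (Dom C f)) = f \<and> Comp C (Idm C (Cod C f)) f = f) \<and>
     (\<forall>f\<in>Arr C. \<forall>g\<in>Arr C. Cod C f = Dom C g \<longrightarrow> Comp C g f \<in> Hom C (Dom C f) (Cod C g)) \<and>
     (\<forall>f\<in>Arr C. \<forall>g\<in>Arr C. \<forall>h\<in>Arr C. Cod C f = Dom C g \<and> Cod C g = Dom C h \<longrightarrow>
        Comp C h (Comp C g f) = Comp C (Comp C h g) f)"

definition is_terminal :: "('o,'m,'z) cat_scheme \<Rightarrow> 'o \<Rightarrow> bool" where
  "is_terminal C T \<longleftrightarrow> T \<in> Ob C \<and> (\<forall>A\<in>Ob C. \<exists>!u. u \<in> Hom C A T)"

definition is_product :: "('o,'m,'z) cat_scheme \<Rightarrow> 'o \<Rightarrow> 'o \<Rightarrow> 'o \<Rightarrow> 'm \<Rightarrow> 'm \<Rightarrow> bool" where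
  "is_product C A B X p q \<longleftrightarrow> X \<in> Ob C \<and> p \<in> Hom C X A \<and> q \<in> Hom C X B \<and>
     (\<forall>Y\<in>Ob C. \<forall>g\<in>Hom C Y A. \<forall>h\<in>Hom C Y B.
        \<exists>!u. u \<in> Hom C Y X \<and> Comp C p u = g \<and> Comp C q u = h)"

definition is_projection :: "('o,'m,'z) cat_scheme \<Rightarrow> 'm \<Rightarrow> bool" where
  "is_projection C p \<longleftrightarrow> p \<in> Arr C \<and> (\<exists>B q. is_product C (Cod C p) B (Dom C p) p q)"

definition is_pullback :: "('o,'m,'z) cat_scheme \<Rightarrow> 'm \<Rightarrow> 'm \<Rightarrow> 'm \<Rightarrow> 'm \<Rightarrow> bool" where
  "is_pullback C p f p' f' \<longleftrightarrow>
     p \<in> Arr C \<and> f \<in> Arr C \<and> Cod C f = Cod C p \<and>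
     p' \<in> Hom C (Dom C p') (Dom C f) \<and> f' \<in> Hom C (Dom C p') (Dom C p) \<and>
     Comp C p f' = Comp C f p' \<and>
     (\<forall>Y\<in>Ob C. \<forall>g\<in>Hom C Y (Dom C f). \<forall>h\<in>Hom C Y (Dom C p).
        Comp C f g = Comp C p h \<longrightarrow>
        (\<exists>!u. u \<in> Hom C Y (Dom C p') \<and> Comp C p' u = g \<and> Comp C f' u = h))"

record ('o,'m) fpcat = "('o,'m) cat" +
  Term :: 'o
  Prod :: "'o \<Rightarrow> 'o \<Rightarrow> 'o"
  Pr1  :: "'o \<Rightarrow> 'o \<Rightarrow> 'm"
  Pr2  :: "'o \<Rightarrow> 'o \<Rightarrow> 'm"
  Pair :: "'m \<Rightarrow> 'm \<Rightarrow> 'm"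

definition finite_products :: "('o,'m,'z) fpcat_scheme \<Rightarrow> bool" where
  "finite_products C \<longleftrightarrow> category C \<and> is_terminal C (Term C) \<and>
     (\<forall>A\<in>Ob C. \<forall>B\<in>Ob C.
        is_product C A B (Prod C A B) (Pr1 C A B) (Pr2 C A B) \<and>
        (\<forall>Y\<in>Ob C. \<forall>g\<in>Hom C Y A. \<forall>h\<in>Hom C Y B.
           Pair C g h \<in> Hom C Y (Prod C A B) \<and>
           Comp C (Pr1 C A B) (Pair C g h) = g \<and> Comp C (Pr2 C A B) (Pair C g h) = h))"

definition times_id :: "('o,'m,'z) fpcat_scheme \<Rightarrow> 'm \<Rightarrow> 'o \<Rightarrow> 'm" where
  "times_id C f D = Pair C (Comp C f (Pr1 C (Dom C f) D)) (Pr2 C (Dom C f) D)"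

definition has_exponents :: "('o,'m,'z) fpcat_scheme \<Rightarrow> bool" where
  "has_exponents C \<longleftrightarrow>
     (\<forall>B\<in>Ob C. \<forall>D\<in>Ob C. \<exists>E\<in>Ob C. \<exists>ev\<in>Hom C (Prod C E B) D.
        \<forall>Y\<in>Ob C. \<forall>g\<in>Hom C (Prod C Y B) D.
          \<exists>!u. u \<in> Hom C Y E \<and> Comp C ev (times_id C u B) = g)"

record ('o,'m,'p) doctrine =
  PC :: "'o \<Rightarrow> 'p set"              (* underlying set of the poset P(A) *)
  Le :: "'o \<Rightarrow> 'p \<Rightarrow> 'p \<Rightarrow> bool"     (* order of P(A) *)
  Rx :: "'m \<Rightarrow> 'p \<Rightarrow> 'p"            (* reindexing P_f *)

definition slat_doctrine :: "('o,'m,'z) fpcat_scheme \<Rightarrow> ('o,'m,'p) doctrine \<Rightarrow> bool" where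
  "slat_doctrine C P \<longleftrightarrow> finite_products C \<and>
     (\<forall>A\<in>Ob C.
        (\<forall>x\<in>PC P A. Le P A x x) \<and>
        (\<forall>x\<in>PC P A. \<forall>y\<in>PC P A. \<forall>z\<in>PC P A. Le P A x y \<and> Le P A y z \<longrightarrow> Le P A x z) \<and>
        (\<forall>x\<in>PC P A. \<forall>y\<in>PC P A. Le P A x y \<and> Le P A y x \<longrightarrow> x = y)) \<and>
     (\<forall>f\<in>Arr C. \<forall>x\<in>PC P (Cod C f). Rx P f x \<in> PC P (Dom C f)) \<and>
     (\<forall>f\<in>Arr C. \<forall>x\<in>PC P (Cod C f). \<forall>y\<in>PC P (Cod C f).
        Le P (Cod C f) x y \<longrightarrow> Le P (Dom C f) (Rx P f x) (Rx P f y)) \<and>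
     (\<forall>A\<in>Ob C. \<forall>x\<in>PC P A. Rx P (Idm C A) x = x) \<and>
     (\<forall>f\<in>Arr C. \<forall>g\<in>Arr C. Cod C f = Dom C g \<longrightarrow>
        (\<forall>x\<in>PC P (Cod C g). Rx P (Comp C g f) x = Rx P f (Rx P g x)))"

definition right_adj :: "('o,'m,'z) fpcat_scheme \<Rightarrow> ('o,'m,'p) doctrine \<Rightarrow> 'm \<Rightarrow> ('p \<Rightarrow> 'p) \<Rightarrow> bool" where
  "right_adj C P p F \<longleftrightarrow>
     (\<forall>x\<in>PC P (Dom C p). F x \<in> PC P (Cod C p)) \<and>
     (\<forall>a\<in>PC P (Cod C p). \<forall>x\<in>PC P (Dom C p).
        Le P (Cod C p) a (F x) \<longleftrightarrow> Le P (Dom C p) (Rx P p a) x)"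

definition universal :: "('o,'m,'z) fpcat_scheme \<Rightarrow> ('o,'m,'p) doctrine \<Rightarrow> bool" where
  "universal C P \<longleftrightarrow> slat_doctrine C P \<and>
     (\<forall>p. is_projection C p \<longrightarrow> (\<exists>F. right_adj C P p F)) \<and>
     (\<forall>p f p' f' F F'. is_projection C p \<and> is_pullback C p f p' f' \<and>
        right_adj C P p F \<and> right_adj C P p' F' \<longrightarrow>
        (\<forall>x\<in>PC P (Dom C p). F' (Rx P f' x) = Rx P f (F x)))"

section \<open>Existential completion (on representatives; the poset is the reflection)\<close>

text \<open>An element (A,B,alpha) of P^ex(A) is represented by the pair (B, alpha).\<close>
definition PexC :: "('o,'m,'z) fpcat_scheme \<Rightarrow> ('o,'m,'p) doctrine \<Rightarrow> 'o \<Rightarrow> ('o \<times> 'p) set" where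
  "PexC C P A = {(B, \<alpha>). B \<in> Ob C \<and> \<alpha> \<in> PC P (Prod C A B)}"

definition ex_le :: "('o,'m,'z) fpcat_scheme \<Rightarrow> ('o,'m,'p) doctrine \<Rightarrow> 'o \<Rightarrow> 'o \<times> 'p \<Rightarrow> 'o \<times> 'p \<Rightarrow> bool" where
  "ex_le C P A x y \<longleftrightarrow>
     (\<exists>f\<in>Hom C (Prod C A (fst x)) (fst y).
        Le P (Prod C A (fst x)) (snd x) (Rx P (Pair C (Pr1 C A (fst x)) f) (snd y)))"

definition ex_eq :: "('o,'m,'z) fpcat_scheme \<Rightarrow> ('o,'m,'p) doctrine \<Rightarrow> 'o \<Rightarrow> 'o \<times> 'p \<Rightarrow> 'o \<times> 'p \<Rightarrow> bool" where
  "ex_eq C P A x y \<longleftrightarrow> ex_le C P A x y \<and> ex_le C P A y x"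

definition ex_rx :: "('o,'m,'z) fpcat_scheme \<Rightarrow> ('o,'m,'p) doctrine \<Rightarrow> 'm \<Rightarrow> 'o \<times> 'p \<Rightarrow> 'o \<times> 'p" where
  "ex_rx C P f y = (fst y, Rx P (times_id C f (fst y)) (snd y))"

definition ex_right_adj :: "('o,'m,'z) fpcat_scheme \<Rightarrow> ('o,'m,'p) doctrine \<Rightarrow> 'm \<Rightarrow> ('o \<times> 'p \<Rightarrow> 'o \<times> 'p) \<Rightarrow> bool" where
  "ex_right_adj C P p R \<longleftrightarrow>
     (\<forall>y\<in>PexC C P (Dom C p). R y \<in> PexC C P (Cod C p)) \<and>
     (\<forall>x\<in>PexC C P (Cod C p). \<forall>y\<in>PexC C P (Dom C p).
        ex_le C P (Cod C p) x (R y) \<longleftrightarrow> ex_le C P (Dom C p) (ex_rx C P p x) y)"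

definition iota :: "('o,'m,'z) fpcat_scheme \<Rightarrow> ('o,'m,'p) doctrine \<Rightarrow> 'o \<Rightarrow> 'p \<Rightarrow> 'o \<times> 'p" where
  "iota C P A \<alpha> = (Term C, Rx P (Pr1 C A (Term C)) \<alpha>)"

end

theory Submission
  imports Defs
begin


lemma ex1_eq: "\<exists>!x. Q x \<Longrightarrow> Q a \<Longrightarrow> Q b \<Longrightarrow> a = b" by blast

lemma hom_D: "f \<in> Hom C X Y \<Longrightarrow> f \<in> Arr C \<and> Dom C f = X \<and> Cod C f = Y"
  by (simp add: Hom_def)

lemma hom_I: "f \<in> Arr C \<Longrightarrow> f \<in> Hom C (Dom C f) (Cod C f)"
  by (simp add: Hom_def)

lemma fp_cat: "finite_products C \<Longrightarrow> category C"
  by (simp add: finite_products_def)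

lemma hom_ob: "category C \<Longrightarrow> f \<in> Hom C X Y \<Longrightarrow> X \<in> Ob C \<and> Y \<in> Ob C"
  by (auto simp: category_def Hom_def)

lemma comp_hom: "category C \<Longrightarrow> f \<in> Hom C X Y \<Longrightarrow> g \<in> Hom C Y Z \<Longrightarrow> Comp C g f \<in> Hom C X Z"
  unfolding category_def Hom_def by auto

lemma comp_assoc: "category C \<Longrightarrow> f \<in> Hom C X Y \<Longrightarrow> g \<in> Hom C Y Z \<Longrightarrow> h \<in> Hom C Z W \<Longrightarrow>
   Comp C h (Comp C g f) = Comp C (Comp C h g) f"
  unfolding category_def Hom_def by auto

lemma id_hom: "category C \<Longrightarrow> X \<in> Ob C \<Longrightarrow> Idm C X \<in> Hom C X X"
  unfolding category_def by auto

lemma comp_id_r: "category C \<Longrightarrow> f \<in> Hom C X Y \<Longrightarrow> Comp C f (Idm C X) = f"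
  unfolding category_def Hom_def by auto

lemma comp_id_l: "category C \<Longrightarrow> f \<in> Hom C X Y \<Longrightarrow> Comp C (Idm C Y) f = f"
  unfolding category_def Hom_def by auto

lemma prod_is: "finite_products C \<Longrightarrow> A \<in> Ob C \<Longrightarrow> B \<in> Ob C \<Longrightarrow>
   is_product C A B (Prod C A B) (Pr1 C A B) (Pr2 C A B)"
  unfolding finite_products_def by auto

lemma prod_ob: "finite_products C \<Longrightarrow> A \<in> Ob C \<Longrightarrow> B \<in> Ob C \<Longrightarrow> Prod C A B \<in> Ob C"
  by (drule prod_is, assumption+) (unfold is_product_def, elim conjE)

lemma pr1_hom: "finite_products C \<Longrightarrow> A \<in> Ob C \<Longrightarrow> B \<in> Ob C \<Longrightarrow> Pr1 C A B \<in> Hom C (Prod C A B) A"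
  by (drule prod_is, assumption+) (unfold is_product_def, elim conjE)

lemma pr2_hom: "finite_products C \<Longrightarrow> A \<in> Ob C \<Longrightarrow> B \<in> Ob C \<Longrightarrow> Pr2 C A B \<in> Hom C (Prod C A B) B"
  by (drule prod_is, assumption+) (unfold is_product_def, elim conjE)

lemma pair_props: "finite_products C \<Longrightarrow> g \<in> Hom C Y A \<Longrightarrow> h \<in> Hom C Y B \<Longrightarrow>
   Pair C g h \<in> Hom C Y (Prod C A B) \<and>
   Comp C (Pr1 C A B) (Pair C g h) = g \<and> Comp C (Pr2 C A B) (Pair C g h) = h"
proof -
  assume a: "finite_products C" "g \<in> Hom C Y A" "h \<in> Hom C Y B"
  have c: "category C" using a(1) by (rule fp_cat)
  have "Y \<in> Ob C" "A \<in> Ob C" "B \<in> Ob C" using hom_ob[OF c a(2)] hom_ob[OF c a(3)] by auto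
  moreover have "\<forall>A\<in>Ob C. \<forall>B\<in>Ob C.
        (\<forall>Y\<in>Ob C. \<forall>g\<in>Hom C Y A. \<forall>h\<in>Hom C Y B.
           Pair C g h \<in> Hom C Y (Prod C A B) \<and>
           Comp C (Pr1 C A B) (Pair C g h) = g \<and> Comp C (Pr2 C A B) (Pair C g h) = h)"
    using a(1) unfolding finite_products_def by simp
  ultimately show ?thesis using a(2,3) by simp
qed

lemma prod_ext: "finite_products C \<Longrightarrow> A \<in> Ob C \<Longrightarrow> B \<in> Ob C \<Longrightarrow>
   u \<in> Hom C Y (Prod C A B) \<Longrightarrow> v \<in> Hom C Y (Prod C A B) \<Longrightarrow>
   Comp C (Pr1 C A B) u = Comp C (Pr1 C A B) v \<Longrightarrow> Comp C (Pr2 C A B) u = Comp C (Pr2 C A B) v \<Longrightarrow> u = v"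
proof -
  assume a: "finite_products C" "A \<in> Ob C" "B \<in> Ob C" "u \<in> Hom C Y (Prod C A B)"
    "v \<in> Hom C Y (Prod C A B)" "Comp C (Pr1 C A B) u = Comp C (Pr1 C A B) v"
    "Comp C (Pr2 C A B) u = Comp C (Pr2 C A B) v"
  have c: "category C" using a fp_cat by blast
  have Y: "Y \<in> Ob C" using hom_ob[OF c a(4)] by auto
  have g: "Comp C (Pr1 C A B) u \<in> Hom C Y A" using comp_hom[OF c a(4) pr1_hom[OF a(1-3)]] .
  have h: "Comp C (Pr2 C A B) u \<in> Hom C Y B" using comp_hom[OF c a(4) pr2_hom[OF a(1-3)]] .
  have "\<exists>!w. w \<in> Hom C Y (Prod C A B) \<and> Comp C (Pr1 C A B) w = Comp C (Pr1 C A B) u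
      \<and> Comp C (Pr2 C A B) w = Comp C (Pr2 C A B) u"
  proof -
    have "\<forall>Y\<in>Ob C. \<forall>g\<in>Hom C Y A. \<forall>h\<in>Hom C Y B.
        \<exists>!u. u \<in> Hom C Y (Prod C A B) \<and> Comp C (Pr1 C A B) u = g \<and> Comp C (Pr2 C A B) u = h"
      using prod_is[OF a(1-3)] unfolding is_product_def by (elim conjE)
    then show ?thesis using Y g h by simp
  qed
  then show "u = v"
  proof (rule ex1_eq)
    show "u \<in> Hom C Y (Prod C A B) \<and> Comp C (Pr1 C A B) u = Comp C (Pr1 C A B) u
      \<and> Comp C (Pr2 C A B) u = Comp C (Pr2 C A B) u" using a(4) by simp
    show "v \<in> Hom C Y (Prod C A B) \<and> Comp C (Pr1 C A B) v = Comp C (Pr1 C A B) u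
      \<and> Comp C (Pr2 C A B) v = Comp C (Pr2 C A B) u"
      by (intro conjI) (fact a(5), rule a(6)[symmetric], rule a(7)[symmetric])
  qed
qed

lemma pair_comp: "finite_products C \<Longrightarrow> g \<in> Hom C Y A \<Longrightarrow> h \<in> Hom C Y B \<Longrightarrow> k \<in> Hom C W Y \<Longrightarrow>
   Comp C (Pair C g h) k = Pair C (Comp C g k) (Comp C h k)"
proof -
  assume a: "finite_products C" "g \<in> Hom C Y A" "h \<in> Hom C Y B" "k \<in> Hom C W Y"
  have c: "category C" using a fp_cat by blast
  have ob: "A \<in> Ob C" "B \<in> Ob C" using hom_ob[OF c a(2)] hom_ob[OF c a(3)] by auto
  note p = pair_props[OF a(1-3)]
  have gk: "Comp C g k \<in> Hom C W A" using comp_hom[OF c a(4) a(2)] .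
  have hk: "Comp C h k \<in> Hom C W B" using comp_hom[OF c a(4) a(3)] .
  note q = pair_props[OF a(1) gk hk]
  show ?thesis
  proof (rule prod_ext[OF a(1) ob])
    show "Comp C (Pair C g h) k \<in> Hom C W (Prod C A B)" using comp_hom[OF c a(4)] p by blast
    show "Pair C (Comp C g k) (Comp C h k) \<in> Hom C W (Prod C A B)" using q by blast
    show "Comp C (Pr1 C A B) (Comp C (Pair C g h) k) = Comp C (Pr1 C A B) (Pair C (Comp C g k) (Comp C h k))"
      using comp_assoc[OF c a(4) _ pr1_hom[OF a(1) ob]] p q by metis
    show "Comp C (Pr2 C A B) (Comp C (Pair C g h) k) = Comp C (Pr2 C A B) (Pair C (Comp C g k) (Comp C h k))"
      using comp_assoc[OF c a(4) _ pr2_hom[OF a(1) ob]] p q by metis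
  qed
qed

lemma pair_pr_id: "finite_products C \<Longrightarrow> A \<in> Ob C \<Longrightarrow> B \<in> Ob C \<Longrightarrow>
   Pair C (Pr1 C A B) (Pr2 C A B) = Idm C (Prod C A B)"
proof -
  assume a: "finite_products C" "A \<in> Ob C" "B \<in> Ob C"
  have c: "category C" using a fp_cat by blast
  note p1 = pr1_hom[OF a] and p2 = pr2_hom[OF a]
  note p = pair_props[OF a(1) p1 p2]
  have i: "Idm C (Prod C A B) \<in> Hom C (Prod C A B) (Prod C A B)" using id_hom[OF c prod_ob[OF a]] .
  show ?thesis
    by (rule prod_ext[OF a _ i]) (use p comp_id_r[OF c p1] comp_id_r[OF c p2] in auto)
qed

lemma pair_eta: "finite_products C \<Longrightarrow> A \<in> Ob C \<Longrightarrow> B \<in> Ob C \<Longrightarrow>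
   u \<in> Hom C Y (Prod C A B) \<Longrightarrow> Pair C (Comp C (Pr1 C A B) u) (Comp C (Pr2 C A B) u) = u"
proof -
  assume a: "finite_products C" "A \<in> Ob C" "B \<in> Ob C" "u \<in> Hom C Y (Prod C A B)"
  have c: "category C" using a(1) by (rule fp_cat)
  have g: "Comp C (Pr1 C A B) u \<in> Hom C Y A" using comp_hom[OF c a(4) pr1_hom[OF a(1-3)]] .
  have h: "Comp C (Pr2 C A B) u \<in> Hom C Y B" using comp_hom[OF c a(4) pr2_hom[OF a(1-3)]] .
  note p = pair_props[OF a(1) g h]
  show ?thesis by (rule prod_ext[OF a(1-3) _ a(4)]) (use p in auto)
qed

lemma term_map: "finite_products C \<Longrightarrow> X \<in> Ob C \<Longrightarrow> \<exists>u. u \<in> Hom C X (Term C)"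
proof -
  assume a: "finite_products C" "X \<in> Ob C"
  have "\<forall>A\<in>Ob C. \<exists>!u. u \<in> Hom C A (Term C)" using a(1) unfolding finite_products_def is_terminal_def by simp
  then show ?thesis using a(2) by blast
qed

lemma term_ob: "finite_products C \<Longrightarrow> Term C \<in> Ob C"
  unfolding finite_products_def is_terminal_def by simp

lemma sd_fp: "slat_doctrine C P \<Longrightarrow> finite_products C"
  by (simp add: slat_doctrine_def)

lemma rx_mem: "slat_doctrine C P \<Longrightarrow> f \<in> Hom C X Y \<Longrightarrow> x \<in> PC P Y \<Longrightarrow> Rx P f x \<in> PC P X"
  unfolding slat_doctrine_def Hom_def by auto

lemma rx_mono: "slat_doctrine C P \<Longrightarrow> f \<in> Hom C X Y \<Longrightarrow> x \<in> PC P Y \<Longrightarrow> y \<in> PC P Y \<Longrightarrow>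
   Le P Y x y \<Longrightarrow> Le P X (Rx P f x) (Rx P f y)"
  unfolding slat_doctrine_def Hom_def by auto

lemma rx_id: "slat_doctrine C P \<Longrightarrow> X \<in> Ob C \<Longrightarrow> x \<in> PC P X \<Longrightarrow> Rx P (Idm C X) x = x"
  unfolding slat_doctrine_def by auto

lemma rx_comp: "slat_doctrine C P \<Longrightarrow> f \<in> Hom C X Y \<Longrightarrow> g \<in> Hom C Y Z \<Longrightarrow> x \<in> PC P Z \<Longrightarrow>
   Rx P (Comp C g f) x = Rx P f (Rx P g x)"
  unfolding slat_doctrine_def Hom_def by auto

lemma pos_le_refl: "slat_doctrine C P \<Longrightarrow> X \<in> Ob C \<Longrightarrow> x \<in> PC P X \<Longrightarrow> Le P X x x"
  unfolding slat_doctrine_def by auto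

lemma pos_le_trans: "slat_doctrine C P \<Longrightarrow> X \<in> Ob C \<Longrightarrow> x \<in> PC P X \<Longrightarrow> y \<in> PC P X \<Longrightarrow> z \<in> PC P X \<Longrightarrow>
   Le P X x y \<Longrightarrow> Le P X y z \<Longrightarrow> Le P X x z"
  unfolding slat_doctrine_def by blast



lemma pb_lemma:
  assumes fp: "finite_products C" and A: "A \<in> Ob C" and B: "B \<in> Ob C" and E: "E \<in> Ob C"
  shows "is_pullback C (Pr1 C A B) (Pr1 C A E) (Pr1 C (Prod C A E) B) (times_id C (Pr1 C A E) B)"
proof -
  have c: "category C" using fp by (rule fp_cat)
  let ?pr = "Pr1 C A B" and ?rho = "Pr2 C A B" and ?pi = "Pr1 C A E"
  let ?AE = "Prod C A E" and ?AB = "Prod C A B"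
  let ?Z = "Prod C ?AE B"
  let ?Q1 = "Pr1 C ?AE B" and ?Q2 = "Pr2 C ?AE B"
  have AE: "?AE \<in> Ob C" using prod_ob[OF fp A E] .
  have AB: "?AB \<in> Ob C" using prod_ob[OF fp A B] .
  have pr: "?pr \<in> Hom C ?AB A" using pr1_hom[OF fp A B] .
  have rho: "?rho \<in> Hom C ?AB B" using pr2_hom[OF fp A B] .
  have pi: "?pi \<in> Hom C ?AE A" using pr1_hom[OF fp A E] .
  have Q1: "?Q1 \<in> Hom C ?Z ?AE" using pr1_hom[OF fp AE B] .
  have Q2: "?Q2 \<in> Hom C ?Z B" using pr2_hom[OF fp AE B] .
  have fdef: "times_id C ?pi B = Pair C (Comp C ?pi ?Q1) ?Q2"
    using pi by (simp add: times_id_def Hom_def)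
  have piQ1: "Comp C ?pi ?Q1 \<in> Hom C ?Z A" using comp_hom[OF c Q1 pi] .
  have f: "times_id C ?pi B \<in> Hom C ?Z ?AB" and pf: "Comp C ?pr (times_id C ?pi B) = Comp C ?pi ?Q1"
    and rf: "Comp C ?rho (times_id C ?pi B) = ?Q2"
    using pair_props[OF fp piQ1 Q2] fdef by auto
  have L: "Comp C (times_id C ?pi B) u = Pair C (Comp C ?pi (Comp C ?Q1 u)) (Comp C ?Q2 u)"
    if u: "u \<in> Hom C Y ?Z" for u Y
    unfolding fdef pair_comp[OF fp piQ1 Q2 u] comp_assoc[OF c u Q1 pi] ..
  have univ: "\<exists>!u. u \<in> Hom C Y ?Z \<and> Comp C ?Q1 u = g \<and> Comp C (times_id C ?pi B) u = h"
    if Y: "Y \<in> Ob C" and g: "g \<in> Hom C Y ?AE" and h: "h \<in> Hom C Y ?AB"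
      and eq: "Comp C ?pi g = Comp C ?pr h" for Y g h
  proof -
    have rh: "Comp C ?rho h \<in> Hom C Y B" using comp_hom[OF c h rho] .
    note u0 = pair_props[OF fp g rh]
    have u0h: "Pair C g (Comp C ?rho h) \<in> Hom C Y ?Z" using u0 by blast
    have prh: "Comp C ?pr h \<in> Hom C Y A" using comp_hom[OF c h pr] .
    have fu0: "Comp C (times_id C ?pi B) (Pair C g (Comp C ?rho h)) = h"
      unfolding L[OF u0h] using u0 eq pair_eta[OF fp A B h] by simp
    show ?thesis
    proof (rule ex1I[where a="Pair C g (Comp C ?rho h)"])
      show "Pair C g (Comp C ?rho h) \<in> Hom C Y ?Z \<and> Comp C ?Q1 (Pair C g (Comp C ?rho h)) = g \<and>
          Comp C (times_id C ?pi B) (Pair C g (Comp C ?rho h)) = h"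
        using u0 fu0 by blast
    next
      fix u assume "u \<in> Hom C Y ?Z \<and> Comp C ?Q1 u = g \<and> Comp C (times_id C ?pi B) u = h"
      then have uh: "u \<in> Hom C Y ?Z" and u1: "Comp C ?Q1 u = g" and u2: "Comp C (times_id C ?pi B) u = h"
        by auto
      have "Comp C ?rho h = Comp C (Comp C ?rho (times_id C ?pi B)) u"
        using comp_assoc[OF c uh f rho] u2 by simp
      also have "\<dots> = Comp C ?Q2 u" using rf by simp
      finally have u3: "Comp C ?Q2 u = Comp C ?rho h" by simp
      show "u = Pair C g (Comp C ?rho h)"
        by (rule prod_ext[OF fp AE B uh u0h]) (use u0 u1 u3 in auto)
    qed
  qed
  have d: "Dom C ?pr = ?AB" "Dom C ?pi = ?AE" "Cod C ?pi = A" "Cod C ?pr = A" "Dom C ?Q1 = ?Z"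
    using pr pi Q1 by (auto simp: Hom_def)
  have ar: "?pr \<in> Arr C" "?pi \<in> Arr C" using pr pi by (auto simp: Hom_def)
  show ?thesis
    unfolding is_pullback_def d
    using ar Q1 f pf univ by blast
qed



lemma key_ineq:
  assumes sd: "slat_doctrine C P" and A: "A \<in> Ob C" and B: "B \<in> Ob C" and E: "E \<in> Ob C"
    and \<gamma>: "\<gamma> \<in> PC P (Prod C A E)" and \<alpha>: "\<alpha> \<in> PC P (Prod C A B)"
    and le: "Le P (Prod C (Prod C A B) E) (Rx P (times_id C (Pr1 C A B) E) \<gamma>) (Rx P (Pr1 C (Prod C A B) E) \<alpha>)"
  shows "Le P (Prod C (Prod C A E) B) (Rx P (Pr1 C (Prod C A E) B) \<gamma>) (Rx P (times_id C (Pr1 C A E) B) \<alpha>)"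
proof -
  have fp: "finite_products C" using sd by (rule sd_fp)
  have c: "category C" using fp by (rule fp_cat)
  let ?pr = "Pr1 C A B" and ?rho = "Pr2 C A B" and ?pi = "Pr1 C A E" and ?eps = "Pr2 C A E"
  let ?AE = "Prod C A E" and ?AB = "Prod C A B"
  let ?Z = "Prod C ?AE B" and ?X = "Prod C ?AB E"
  let ?Q1 = "Pr1 C ?AE B" and ?Q2 = "Pr2 C ?AE B"
  let ?P1 = "Pr1 C ?AB E" and ?P2 = "Pr2 C ?AB E"
  have AE: "?AE \<in> Ob C" using prod_ob[OF fp A E] .
  have AB: "?AB \<in> Ob C" using prod_ob[OF fp A B] .
  have Z: "?Z \<in> Ob C" using prod_ob[OF fp AE B] .
  have X: "?X \<in> Ob C" using prod_ob[OF fp AB E] .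
  have pr: "?pr \<in> Hom C ?AB A" using pr1_hom[OF fp A B] .
  have pi: "?pi \<in> Hom C ?AE A" using pr1_hom[OF fp A E] .
  have eps: "?eps \<in> Hom C ?AE E" using pr2_hom[OF fp A E] .
  have Q1: "?Q1 \<in> Hom C ?Z ?AE" using pr1_hom[OF fp AE B] .
  have Q2: "?Q2 \<in> Hom C ?Z B" using pr2_hom[OF fp AE B] .
  have P1: "?P1 \<in> Hom C ?X ?AB" using pr1_hom[OF fp AB E] .
  have P2: "?P2 \<in> Hom C ?X E" using pr2_hom[OF fp AB E] .
  have piQ1: "Comp C ?pi ?Q1 \<in> Hom C ?Z A" using comp_hom[OF c Q1 pi] .
  have epsQ1: "Comp C ?eps ?Q1 \<in> Hom C ?Z E" using comp_hom[OF c Q1 eps] .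
  have prP1: "Comp C ?pr ?P1 \<in> Hom C ?X A" using comp_hom[OF c P1 pr] .
  define f' where "f' = Pair C (Comp C ?pi ?Q1) ?Q2"
  have f'def: "times_id C ?pi B = f'"
    using pi by (simp add: times_id_def Hom_def f'_def)
  define t where "t = Pair C (Comp C ?pr ?P1) ?P2"
  have tdef: "times_id C ?pr E = t"
    using pr by (simp add: times_id_def Hom_def t_def)
  have f'p: "f' \<in> Hom C ?Z ?AB" "Comp C ?pr f' = Comp C ?pi ?Q1" "Comp C ?rho f' = ?Q2"
    using pair_props[OF fp piQ1 Q2] unfolding f'_def by auto
  have tp: "t \<in> Hom C ?X ?AE" "Comp C ?pi t = Comp C ?pr ?P1" "Comp C ?eps t = ?P2"
    using pair_props[OF fp prP1 P2] unfolding t_def by auto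
  define s where "s = Pair C f' (Comp C ?eps ?Q1)"
  have sp: "s \<in> Hom C ?Z ?X" "Comp C ?P1 s = f'" "Comp C ?P2 s = Comp C ?eps ?Q1"
    using pair_props[OF fp f'p(1) epsQ1] unfolding s_def by auto
  have ts: "Comp C t s = ?Q1"
  proof (rule prod_ext[OF fp A E comp_hom[OF c sp(1) tp(1)] Q1])
    have "Comp C ?pi (Comp C t s) = Comp C (Comp C ?pi t) s" using comp_assoc[OF c sp(1) tp(1) pi] .
    also have "\<dots> = Comp C (Comp C ?pr ?P1) s" using tp(2) by simp
    also have "\<dots> = Comp C ?pr (Comp C ?P1 s)" using comp_assoc[OF c sp(1) P1 pr] by simp
    also have "\<dots> = Comp C ?pi ?Q1" using sp(2) f'p(2) by simp
    finally show "Comp C ?pi (Comp C t s) = Comp C ?pi ?Q1" .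
    have "Comp C ?eps (Comp C t s) = Comp C (Comp C ?eps t) s" using comp_assoc[OF c sp(1) tp(1) eps] .
    also have "\<dots> = Comp C ?eps ?Q1" using tp(3) sp(3) by simp
    finally show "Comp C ?eps (Comp C t s) = Comp C ?eps ?Q1" .
  qed
  have tg: "Rx P t \<gamma> \<in> PC P ?X" using rx_mem[OF sd tp(1) \<gamma>] .
  have pa: "Rx P ?P1 \<alpha> \<in> PC P ?X" using rx_mem[OF sd P1 \<alpha>] .
  have "Rx P ?Q1 \<gamma> = Rx P s (Rx P t \<gamma>)" using rx_comp[OF sd sp(1) tp(1) \<gamma>] ts by simp
  moreover have "Rx P f' \<alpha> = Rx P s (Rx P ?P1 \<alpha>)" using rx_comp[OF sd sp(1) P1 \<alpha>] sp(2) by simp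
  moreover have "Le P ?Z (Rx P s (Rx P t \<gamma>)) (Rx P s (Rx P ?P1 \<alpha>))"
    using rx_mono[OF sd sp(1) tg pa] le tdef by simp
  ultimately show ?thesis using f'def by simp
qed



lemma proj_pr1: "finite_products C \<Longrightarrow> A \<in> Ob C \<Longrightarrow> B \<in> Ob C \<Longrightarrow> is_projection C (Pr1 C A B)"
proof -
  assume a: "finite_products C" "A \<in> Ob C" "B \<in> Ob C"
  have h: "Pr1 C A B \<in> Hom C (Prod C A B) A" using pr1_hom[OF a] .
  then have d: "Pr1 C A B \<in> Arr C" "Cod C (Pr1 C A B) = A" "Dom C (Pr1 C A B) = Prod C A B"
    by (auto simp: Hom_def)
  show ?thesis unfolding is_projection_def d using d(1) prod_is[OF a] by blast
qed

theorem lemma1: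
  fixes C :: "('o,'m,'z) fpcat_scheme" and P :: "('o,'m,'p) doctrine"
  assumes "universal C P"
    and "has_exponents C"
    and "A \<in> Ob C" and "B \<in> Ob C"
    and "right_adj C P (Pr1 C A B) Fa"
    and "ex_right_adj C P (Pr1 C A B) Fex"
  shows "\<forall>\<alpha>\<in>PC P (Prod C A B).
           ex_eq C P A (iota C P A (Fa \<alpha>)) (Fex (iota C P (Prod C A B) \<alpha>))"
proof
  fix \<alpha> assume \<alpha>: "\<alpha> \<in> PC P (Prod C A B)"
  have U: "universal C P" and A: "A \<in> Ob C" and B: "B \<in> Ob C" using assms by auto
  have sd: "slat_doctrine C P" using U by (simp add: universal_def)
  have fp: "finite_products C" using sd by (rule sd_fp)
  have c: "category C" using fp by (rule fp_cat)
  let ?pr = "Pr1 C A B" and ?AB = "Prod C A B" and ?T = "Term C"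
  have T: "?T \<in> Ob C" using term_ob[OF fp] .
  have AB: "?AB \<in> Ob C" using prod_ob[OF fp A B] .
  have AT: "Prod C A ?T \<in> Ob C" using prod_ob[OF fp A T] .
  have ABT: "Prod C ?AB ?T \<in> Ob C" using prod_ob[OF fp AB T] .
  have pr: "?pr \<in> Hom C ?AB A" using pr1_hom[OF fp A B] .
  have d: "Dom C ?pr = ?AB" "Cod C ?pr = A" using pr by (auto simp: Hom_def)
  have FaM: "\<And>x. x \<in> PC P ?AB \<Longrightarrow> Fa x \<in> PC P A"
    and adj: "\<And>a x. a \<in> PC P A \<Longrightarrow> x \<in> PC P ?AB \<Longrightarrow> Le P A a (Fa x) \<longleftrightarrow> Le P ?AB (Rx P ?pr a) x"
    using assms(5) unfolding right_adj_def d by auto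
  have FexM: "\<And>y. y \<in> PexC C P ?AB \<Longrightarrow> Fex y \<in> PexC C P A"
    and exadj: "\<And>x y. x \<in> PexC C P A \<Longrightarrow> y \<in> PexC C P ?AB \<Longrightarrow>
        ex_le C P A x (Fex y) \<longleftrightarrow> ex_le C P ?AB (ex_rx C P ?pr x) y"
    using assms(6) unfolding ex_right_adj_def d by auto
  have Fa\<alpha>: "Fa \<alpha> \<in> PC P A" using FaM[OF \<alpha>] .
  have counit: "Le P ?AB (Rx P ?pr (Fa \<alpha>)) \<alpha>"
    using adj[OF Fa\<alpha> \<alpha>] pos_le_refl[OF sd A Fa\<alpha>] by simp
  let ?x0 = "iota C P A (Fa \<alpha>)" and ?i0 = "iota C P ?AB \<alpha>"
  have PAT: "Pr1 C A ?T \<in> Hom C (Prod C A ?T) A" using pr1_hom[OF fp A T] .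
  have PABT: "Pr1 C ?AB ?T \<in> Hom C (Prod C ?AB ?T) ?AB" using pr1_hom[OF fp AB T] .
  have PABT2: "Pr2 C ?AB ?T \<in> Hom C (Prod C ?AB ?T) ?T" using pr2_hom[OF fp AB T] .
  have x0: "?x0 \<in> PexC C P A"
    unfolding iota_def PexC_def using T rx_mem[OF sd PAT Fa\<alpha>] by simp
  have i0: "?i0 \<in> PexC C P ?AB"
    unfolding iota_def PexC_def using T rx_mem[OF sd PABT \<alpha>] by simp
  have dir1: "ex_le C P A ?x0 (Fex ?i0)"
  proof -
    have prP: "Comp C ?pr (Pr1 C ?AB ?T) \<in> Hom C (Prod C ?AB ?T) A" using comp_hom[OF c PABT pr] .
    have tdef: "times_id C ?pr ?T = Pair C (Comp C ?pr (Pr1 C ?AB ?T)) (Pr2 C ?AB ?T)"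
      using d by (simp add: times_id_def)
    note tp = pair_props[OF fp prP PABT2]
    have th: "times_id C ?pr ?T \<in> Hom C (Prod C ?AB ?T) (Prod C A ?T)" using tp tdef by simp
    have "Rx P (times_id C ?pr ?T) (Rx P (Pr1 C A ?T) (Fa \<alpha>))
        = Rx P (Comp C (Pr1 C A ?T) (times_id C ?pr ?T)) (Fa \<alpha>)"
      using rx_comp[OF sd th PAT Fa\<alpha>] by simp
    also have "\<dots> = Rx P (Comp C ?pr (Pr1 C ?AB ?T)) (Fa \<alpha>)" using tp tdef by simp
    also have "\<dots> = Rx P (Pr1 C ?AB ?T) (Rx P ?pr (Fa \<alpha>))" using rx_comp[OF sd PABT pr Fa\<alpha>] .
    finally have L: "Rx P (times_id C ?pr ?T) (Rx P (Pr1 C A ?T) (Fa \<alpha>)) = Rx P (Pr1 C ?AB ?T) (Rx P ?pr (Fa \<alpha>))" .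
    have R: "Rx P (Pair C (Pr1 C ?AB ?T) (Pr2 C ?AB ?T)) (Rx P (Pr1 C ?AB ?T) \<alpha>) = Rx P (Pr1 C ?AB ?T) \<alpha>"
      using pair_pr_id[OF fp AB T] rx_id[OF sd ABT rx_mem[OF sd PABT \<alpha>]] by simp
    have "Le P (Prod C ?AB ?T) (Rx P (Pr1 C ?AB ?T) (Rx P ?pr (Fa \<alpha>))) (Rx P (Pr1 C ?AB ?T) \<alpha>)"
      using rx_mono[OF sd PABT rx_mem[OF sd pr Fa\<alpha>] \<alpha> counit] .
    then have "ex_le C P ?AB (ex_rx C P ?pr ?x0) ?i0"
      unfolding ex_le_def ex_rx_def iota_def using PABT2 L R by (auto intro!: bexI[of _ "Pr2 C ?AB ?T"])
    then show ?thesis using exadj[OF x0 i0] by simp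
  qed
  obtain E \<gamma> where Fi: "Fex ?i0 = (E, \<gamma>)" by (cases "Fex ?i0") auto
  have E: "E \<in> Ob C" and \<gamma>: "\<gamma> \<in> PC P (Prod C A E)" using FexM[OF i0] Fi by (auto simp: PexC_def)
  have AE: "Prod C A E \<in> Ob C" using prod_ob[OF fp A E] .
  have PAE1: "Pr1 C A E \<in> Hom C (Prod C A E) A" using pr1_hom[OF fp A E] .
  have PAE2: "Pr2 C A E \<in> Hom C (Prod C A E) E" using pr2_hom[OF fp A E] .
  have refl: "ex_le C P A (E, \<gamma>) (E, \<gamma>)"
    unfolding ex_le_def using PAE2 pair_pr_id[OF fp A E] rx_id[OF sd AE \<gamma>] pos_le_refl[OF sd AE \<gamma>]
    by (auto intro!: bexI[of _ "Pr2 C A E"])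
  have EP: "(E, \<gamma>) \<in> PexC C P A" using E \<gamma> by (simp add: PexC_def)
  have "ex_le C P ?AB (ex_rx C P ?pr (E, \<gamma>)) ?i0" using exadj[OF EP i0] refl Fi by simp
  then obtain f where f: "f \<in> Hom C (Prod C ?AB E) ?T"
    and lef: "Le P (Prod C ?AB E) (Rx P (times_id C ?pr E) \<gamma>)
        (Rx P (Pair C (Pr1 C ?AB E) f) (Rx P (Pr1 C ?AB ?T) \<alpha>))"
    unfolding ex_le_def ex_rx_def iota_def by auto
  have P1: "Pr1 C ?AB E \<in> Hom C (Prod C ?AB E) ?AB" using pr1_hom[OF fp AB E] .
  note pf = pair_props[OF fp P1 f]
  have "Rx P (Pair C (Pr1 C ?AB E) f) (Rx P (Pr1 C ?AB ?T) \<alpha>) = Rx P (Pr1 C ?AB E) \<alpha>"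
    using rx_comp[OF sd conjunct1[OF pf] PABT \<alpha>] pf by simp
  then have le1: "Le P (Prod C ?AB E) (Rx P (times_id C ?pr E) \<gamma>) (Rx P (Pr1 C ?AB E) \<alpha>)"
    using lef by simp
  have le2: "Le P (Prod C (Prod C A E) B) (Rx P (Pr1 C (Prod C A E) B) \<gamma>) (Rx P (times_id C (Pr1 C A E) B) \<alpha>)"
    using key_ineq[OF sd A B E \<gamma> \<alpha> le1] .
  \<comment> \<open>Beck-Chevalley\<close>
  have projQ: "is_projection C (Pr1 C (Prod C A E) B)" using proj_pr1[OF fp AE B] .
  then obtain F' where F': "right_adj C P (Pr1 C (Prod C A E) B) F'"
    using U unfolding universal_def by blast
  have projP: "is_projection C ?pr" using proj_pr1[OF fp A B] .
  have BC: "\<forall>x\<in>PC P (Dom C ?pr). F' (Rx P (times_id C (Pr1 C A E) B) x) = Rx P (Pr1 C A E) (Fa x)"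
    using U projP pb_lemma[OF fp A B E] assms(5) F' unfolding universal_def by blast
  have Q1: "Pr1 C (Prod C A E) B \<in> Hom C (Prod C (Prod C A E) B) (Prod C A E)" using pr1_hom[OF fp AE B] .
  have dQ: "Dom C (Pr1 C (Prod C A E) B) = Prod C (Prod C A E) B" "Cod C (Pr1 C (Prod C A E) B) = Prod C A E"
    using Q1 by (auto simp: Hom_def)
  have fh: "times_id C (Pr1 C A E) B \<in> Hom C (Prod C (Prod C A E) B) ?AB"
  proof -
    have a1: "Comp C (Pr1 C A E) (Pr1 C (Prod C A E) B) \<in> Hom C (Prod C (Prod C A E) B) A"
      using comp_hom[OF c Q1 PAE1] .
    have "times_id C (Pr1 C A E) B = Pair C (Comp C (Pr1 C A E) (Pr1 C (Prod C A E) B)) (Pr2 C (Prod C A E) B)"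
      using PAE1 by (simp add: times_id_def Hom_def)
    then show ?thesis using pair_props[OF fp a1 pr2_hom[OF fp AE B]] by simp
  qed
  have key: "Le P (Prod C A E) \<gamma> (Rx P (Pr1 C A E) (Fa \<alpha>))"
  proof -
    have "Le P (Prod C A E) \<gamma> (F' (Rx P (times_id C (Pr1 C A E) B) \<alpha>))"
      using F' \<gamma> rx_mem[OF sd fh \<alpha>] le2 unfolding right_adj_def dQ by blast
    then show ?thesis using BC \<alpha> d by simp
  qed
  obtain k where k: "k \<in> Hom C (Prod C A E) ?T" using term_map[OF fp AE] by blast
  note pk = pair_props[OF fp PAE1 k]
  have "Rx P (Pair C (Pr1 C A E) k) (Rx P (Pr1 C A ?T) (Fa \<alpha>)) = Rx P (Pr1 C A E) (Fa \<alpha>)"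
    using rx_comp[OF sd conjunct1[OF pk] PAT Fa\<alpha>] pk by simp
  then have dir2: "ex_le C P A (E, \<gamma>) ?x0"
    unfolding ex_le_def iota_def using k key by (auto intro!: bexI[of _ k])
  show "ex_eq C P A ?x0 (Fex ?i0)" unfolding ex_eq_def using dir1 dir2 Fi by simp
qed

end
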